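(* Assume (A1)–(A4), let $\{\lambda^k\}$ be generated by SLPMM with parameters $\sigma,\alpha>0$, and let $s>0$ be an integer. Set $\beta_0:=\nu_g+\sqrt p\,\kappa_gR$ and $$\vartheta(\sigma,\alpha,s):=\frac{\varepsilon_0\sigma s}{2}+\sigma\beta_0(s-1)+\frac{\alpha R^2}{\varepsilon_0 s}+\frac{2\kappa_fR}{\varepsilon_0}+\frac{\sigma\nu_g^2}{\varepsilon_0}.$$ Then for all $k\ge0$: $\big|\|\lambda^{k+1}\|-\|\lambda^k\|\big|\le\sigma\beta_0$, and almost surely $$\mathbb E\big[\|\lambda^{k+s}\|-\|\lambda^k\|\,\big|\,\mathcal F_k\big]\le\begin{cases} s\sigma\beta_0, & \text{if }\|\lambda^k\|<\vartheta(\sigma,\alpha,s),\\[2pt] -s\,\dfrac{\sigma\varepsilon_0}{2}, & \text{if }\|\lambda^k\|\ge\vartheta(\sigma,\alpha,s).\end{cases}$$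
   Context: Let $\mathcal C\subset\mathbb R^n$ be a nonempty compact convex set. Let $\xi$ be a random vector whose distribution is supported on $\Xi\subseteq\mathbb R^q$, and let $F:\mathcal C\times\Xi\to\mathbb R$ and $G_i:\mathcal C\times\Xi\to\mathbb R$ ($i=1,\dots,p$) be such that $F(\cdot,\xi)$, $G_i(\cdot,\xi)$ are convex and continuous on $\mathcal C$ for every $\xi$, and $f(x):=\mathbb E[F(x,\xi)]$, $g_i(x):=\mathbb E[G_i(x,\xi)]$ are finite on $\mathcal C$. Write $G=(G_1,\dots,G_p)^T$. Stochastic subgradients: $v_0(x,\xi)\in\partial_xF(x,\xi)$, $v_i(x,\xi)\in\partial_xG_i(x,\xi)$. $[t]_+=\max\{t,0\}$, $[t]_+^2=(\max\{t,0\})^2$. SLPMM: fix $\sigma,\alpha>0$, $x^0\in\mathcal C$, $\lambda^0=0\in\mathbb R^p$, i.i.d. copies $\xi^0,\xi^1,\dots$ of $\xi$. For $k\ge0$, $x^{k+1}=\arg\min_{x\in\mathcal C}\{\mathcal L^k_\sigma(x,\lambda^k)+\frac{\alpha}{2}\|x-x^k\|^2\}$ with $\mathcal L^k_\sigma(x,\lambda):=F(x^k,\xi^k)+\langle v_0(x^k,\xi^k),x-x^k\rangle+\frac{1}{2\sigma}[\sum_{i=1}^p[\lambda_i+\sigma(G_i(x^k,\xi^k)+\langle v_i(x^k,\xi^k),x-x^k\rangle)]_+^2-\|\lambda\|^2]$, and $\lambda_i^{k+1}=[\lambda_i^k+\sigma(G_i(x^k,\xi^k)+\langle v_i(x^k,\xi^k),x^{k+1}-x^k\rangle)]_+$.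 $\mathcal F_k$ is the $\sigma$-algebra generated by $\xi^0,\dots,\xi^{k-1}$. Assumptions: (A1) $\|x'-x''\|\le R$ on $\mathcal C$. (A2) $\|G(x,\xi)\|\le\nu_g$ for all $x\in\mathcal C,\xi\in\Xi$. (A3) $\|v_0(x,\xi)\|\le\kappa_f$, $\|v_i(x,\xi)\|\le\kappa_g$ for all $x,\xi$. (A4) (Slater) there exist $\varepsilon_0>0$ and $\hat x\in\mathcal C$ with $g_i(\hat x)\le-\varepsilon_0$ for all $i$. *)

theory Defs
  imports "HOL-Probability.Probability"
begin

text \<open>Subdifferential of a function defined on the set C (the function is regarded
  as +infinity outside C): the usual convex-analysis subdifferential.\<close>
definition subdiff_on :: "('a::real_inner) set \<Rightarrow> ('a \<Rightarrow> real) \<Rightarrow> 'a \<Rightarrow> 'a set" where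
  "subdiff_on C h x = {u. \<forall>y\<in>C. h y \<ge> h x + inner u (y - x)}"

definition gen_filtration ::
  "'w measure \<Rightarrow> 'b measure \<Rightarrow> (nat \<Rightarrow> 'w \<Rightarrow> 'b) \<Rightarrow> nat \<Rightarrow> 'w measure" where
  "gen_filtration M N xi k =
     sigma (space M) (\<Union>i\<in>{..<k}. {xi i -` A \<inter> space M | A. A \<in> sets N})"

definition pos :: "real \<Rightarrow> real" where "pos t = max t 0"

text \<open>Linearized stochastic augmented Lagrangian L^k_sigma(x, lam), where
  xk = x^k, Fk = F(x^k,xi^k), Gk = G(x^k,xi^k), v0k = v_0(x^k,xi^k), vk i = v_i(x^k,xi^k).\<close>
definition slpmm_L ::
  "real \<Rightarrow> real^'n \<Rightarrow> real \<Rightarrow> real^'m \<Rightarrow> real^'n \<Rightarrow> ('m \<Rightarrow> real^'n)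
     \<Rightarrow> real^'n \<Rightarrow> real^'m \<Rightarrow> real" where
  "slpmm_L \<sigma> xk Fk Gk v0k vk x lam =
     Fk + inner v0k (x - xk)
     + (1 / (2 * \<sigma>)) * ((\<Sum>i\<in>UNIV. (pos (lam $ i + \<sigma> * (Gk $ i + inner (vk i) (x - xk))))\<^sup>2)
                        - (norm lam)\<^sup>2)"

end

theory Submission
  imports Defs
begin


lemma vec_meas:
  fixes f :: "'a \<Rightarrow> real^'n"
  assumes "\<And>i. (\<lambda>\<omega>. f \<omega> $ i) \<in> borel_measurable M"
  shows "f \<in> borel_measurable M"
proof (subst borel_measurable_euclidean_space, intro ballI)
  fix b :: "real^'n" assume "b \<in> Basis"
  then obtain i where b: "b = axis i 1" by (auto simp: Basis_vec_def)
  show "(\<lambda>x. f x \<bullet> b) \<in> borel_measurable M"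
    using assms[of i] by (simp add: b inner_axis)
qed

lemma pos_nonneg: "pos t \<ge> 0" by (simp add: pos_def)
lemma pos_mono: "a \<le> b \<Longrightarrow> pos a \<le> pos b" by (simp add: pos_def)
lemma pos_sq_le: "(pos a)\<^sup>2 \<le> a\<^sup>2"
  by (simp add: pos_def max_def power2_eq_square)
lemma pos_lip: "a \<ge> 0 \<Longrightarrow> \<bar>pos (a + t) - a\<bar> \<le> \<bar>t\<bar>"
  by (simp add: pos_def max_def)
lemma pos_conv: assumes "0 \<le> t" "t \<le> 1"
  shows "pos ((1 - t) * a + t * b) \<le> (1 - t) * pos a + t * pos b"
proof -
  have "(1 - t) * a \<le> (1 - t) * pos a" using assms by (intro mult_left_mono) (auto simp: pos_def)
  moreover have "t * b \<le> t * pos b" using assms by (intro mult_left_mono) (auto simp: pos_def)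
  moreover have "0 \<le> (1 - t) * pos a + t * pos b" using assms pos_nonneg by simp
  ultimately show ?thesis by (simp add: pos_def)
qed
lemma sq_conv: fixes a b t :: real assumes "0 \<le> t" "t \<le> 1" shows "((1 - t) * a + t * b)\<^sup>2 \<le> (1 - t) * a\<^sup>2 + t * b\<^sup>2"
proof -
  have "(1 - t) * a\<^sup>2 + t * b\<^sup>2 - ((1 - t) * a + t * b)\<^sup>2 = t * (1 - t) * (a - b)\<^sup>2"
    by algebra
  moreover have "t * (1 - t) * (a - b)\<^sup>2 \<ge> 0" using assms by simp
  ultimately show ?thesis by linarith
qed
lemma pos_sq_conv: assumes "0 \<le> t" "t \<le> 1"
  shows "(pos ((1 - t) * a + t * b))\<^sup>2 \<le> (1 - t) * (pos a)\<^sup>2 + t * (pos b)\<^sup>2"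
proof -
  have "(pos ((1 - t) * a + t * b))\<^sup>2 \<le> ((1 - t) * pos a + t * pos b)\<^sup>2"
    using pos_conv[OF assms, of a b] pos_nonneg by (intro power_mono) auto
  also have "\<dots> \<le> (1 - t) * (pos a)\<^sup>2 + t * (pos b)\<^sup>2" by (rule sq_conv[OF assms])
  finally show ?thesis .
qed

lemma norm_sq_vec: "(norm (x::real^'m))\<^sup>2 = (\<Sum>i\<in>UNIV. (x $ i)\<^sup>2)"
  by (simp add: norm_vec_def L2_set_def sum_nonneg)

lemma inner_vec_real: "inner (x::real^'m) y = (\<Sum>i\<in>UNIV. x $ i * y $ i)"
  by (simp add: inner_vec_def)

lemma limit_nonneg:
  fixes A B :: real
  assumes "\<And>t. 0 < t \<Longrightarrow> t \<le> 1 \<Longrightarrow> 0 \<le> A + t * B"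
  shows "0 \<le> A"
proof (rule ccontr)
  assume "\<not> 0 \<le> A"
  hence A: "A < 0" by simp
  define t where "t = min 1 (- A / (2 * (\<bar>B\<bar> + 1)))"
  have pos: "0 < - A / (2 * (\<bar>B\<bar> + 1))" by (intro divide_pos_pos) (use A in auto)
  have t0: "0 < t" "t \<le> 1" using pos by (auto simp: t_def)
  have "t * \<bar>B\<bar> \<le> (- A / (2 * (\<bar>B\<bar> + 1))) * (\<bar>B\<bar> + 1)"
    using t0 by (intro mult_mono) (auto simp: t_def)
  also have "\<dots> = - A / 2" by (simp add: field_simps)
  finally have "t * \<bar>B\<bar> \<le> - A / 2" .
  moreover have "t * B \<le> t * \<bar>B\<bar>" using t0 by (intro mult_left_mono) auto
  ultimately have "A + t * B < 0" using A by linarith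
  with assms[OF t0] show False by simp
qed

lemma three_point:
  fixes h :: "'a::real_inner \<Rightarrow> real"
  assumes C: "convex C" and x1: "x1 \<in> C" and y: "y \<in> C" and al: "\<alpha> > 0"
    and hconv: "\<And>a b t. a \<in> C \<Longrightarrow> b \<in> C \<Longrightarrow> 0 \<le> t \<Longrightarrow> t \<le> 1 \<Longrightarrow>
        h ((1 - t) *\<^sub>R a + t *\<^sub>R b) \<le> (1 - t) * h a + t * h b"
    and min: "\<And>z. z \<in> C \<Longrightarrow> h x1 + \<alpha> / 2 * (norm (x1 - xk))\<^sup>2 \<le> h z + \<alpha> / 2 * (norm (z - xk))\<^sup>2"
  shows "h x1 + \<alpha> / 2 * (norm (x1 - xk))\<^sup>2 + \<alpha> / 2 * (norm (y - x1))\<^sup>2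
           \<le> h y + \<alpha> / 2 * (norm (y - xk))\<^sup>2"
proof -
  let ?A = "h y - h x1 + \<alpha> * inner (x1 - xk) (y - x1)"
  let ?B = "\<alpha> / 2 * (norm (y - x1))\<^sup>2"
  have "0 \<le> ?A + t * ?B" if t: "0 < t" "t \<le> 1" for t
  proof -
    define z where "z = (1 - t) *\<^sub>R x1 + t *\<^sub>R y"
    have zC: "z \<in> C" unfolding z_def using C x1 y t by (intro convexD) auto
    have hz: "h z \<le> (1 - t) * h x1 + t * h y" unfolding z_def using hconv[OF x1 y] t by auto
    have zx: "z - xk = (x1 - xk) + t *\<^sub>R (y - x1)" unfolding z_def by (simp add: algebra_simps)
    have nz: "(norm (z - xk))\<^sup>2 = (norm (x1 - xk))\<^sup>2 + 2 * t * inner (x1 - xk) (y - x1) + t\<^sup>2 * (norm (y - x1))\<^sup>2"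
      unfolding zx power2_norm_eq_inner by (simp add: algebra_simps inner_commute power2_eq_square)
    define I where "I = inner (x1 - xk) (y - x1)"
    define n1 where "n1 = (norm (x1 - xk))\<^sup>2"
    define n2 where "n2 = (norm (y - x1))\<^sup>2"
    have m: "h x1 + \<alpha> / 2 * n1 \<le> h z + \<alpha> / 2 * (n1 + 2 * t * I + t\<^sup>2 * n2)"
      using min[OF zC] nz unfolding I_def n1_def n2_def by simp
    have "0 \<le> t * (h y - h x1) + \<alpha> * t * I + \<alpha> / 2 * t\<^sup>2 * n2"
      using m hz by (simp add: algebra_simps)
    also have "\<dots> = t * (?A + t * ?B)" unfolding I_def n2_def by (simp add: algebra_simps power2_eq_square)
    finally show ?thesis using t by (simp add: zero_le_mult_iff)
  qed
  hence A: "0 \<le> ?A" by (rule limit_nonneg)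
  have id: "2 * inner (x1 - xk) (y - x1) = (norm (y - xk))\<^sup>2 - (norm (y - x1))\<^sup>2 - (norm (x1 - xk))\<^sup>2"
  proof -
    have "y - xk = (y - x1) + (x1 - xk)" by simp
    hence "(norm (y - xk))\<^sup>2 = (norm (y - x1))\<^sup>2 + 2 * inner (x1 - xk) (y - x1) + (norm (x1 - xk))\<^sup>2"
      by (metis (no_types, lifting) power2_norm_eq_inner inner_add_left inner_add_right inner_commute mult_2 add.assoc)
    thus ?thesis by simp
  qed
  have "\<alpha> * inner (x1 - xk) (y - x1) = \<alpha> / 2 * (2 * inner (x1 - xk) (y - x1))" by simp
  also have "\<dots> = \<alpha> / 2 * ((norm (y - xk))\<^sup>2 - (norm (y - x1))\<^sup>2 - (norm (x1 - xk))\<^sup>2)"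
    by (subst id) (rule refl)
  finally have e: "\<alpha> * inner (x1 - xk) (y - x1) = \<alpha> / 2 * ((norm (y - xk))\<^sup>2 - (norm (y - x1))\<^sup>2 - (norm (x1 - xk))\<^sup>2)" .
  from A e show ?thesis by (simp add: algebra_simps)
qed




locale slp = prob_space M for M :: "'w measure" +
  fixes N :: "'b measure" and \<Xi> :: "'b set"
    and \<xi> :: "'w \<Rightarrow> 'b" and xi :: "nat \<Rightarrow> 'w \<Rightarrow> 'b"
    and C :: "(real^'n) set"
    and F :: "real^'n \<Rightarrow> 'b \<Rightarrow> real"
    and G :: "real^'n \<Rightarrow> 'b \<Rightarrow> real^'m"
    and v0 :: "real^'n \<Rightarrow> 'b \<Rightarrow> real^'n"
    and v :: "'m \<Rightarrow> real^'n \<Rightarrow> 'b \<Rightarrow> real^'n"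
    and \<sigma> \<alpha> R \<nu>g \<kappa>f \<kappa>g \<epsilon>0 :: real
    and \<beta>0 :: real
    and x0 :: "real^'n" and xhat :: "real^'n"
    and x :: "nat \<Rightarrow> 'w \<Rightarrow> real^'n" and lam :: "nat \<Rightarrow> 'w \<Rightarrow> real^'m"
  assumes \<xi>_meas: "\<xi> \<in> measurable M N"
    and xi_meas: "\<And>k. xi k \<in> measurable M N"
    and xi_indep: "prob_space.indep_vars M (\<lambda>_. N) xi UNIV"
    and xi_distr: "\<And>k. distr M N (xi k) = distr M N \<xi>"
    and xi_in: "\<And>k \<omega>. \<omega> \<in> space M \<Longrightarrow> xi k \<omega> \<in> \<Xi>"
    and C_convex: "convex C"
    and G_meas: "(\<lambda>(y, z). G y z) \<in> borel_measurable (borel \<Otimes>\<^sub>M N)"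
    and v_sub: "\<And>i y z. y \<in> C \<Longrightarrow> z \<in> \<Xi> \<Longrightarrow> v i y z \<in> subdiff_on C (\<lambda>u. G u z $ i) y"
    and v_meas: "\<And>i. (\<lambda>(y, z). v i y z) \<in> borel_measurable (borel \<Otimes>\<^sub>M N)"
    and A1: "\<And>y y'. y \<in> C \<Longrightarrow> y' \<in> C \<Longrightarrow> norm (y - y') \<le> R"
    and A2: "\<And>y z. y \<in> C \<Longrightarrow> z \<in> \<Xi> \<Longrightarrow> norm (G y z) \<le> \<nu>g"
    and A3f: "\<And>y z. y \<in> C \<Longrightarrow> z \<in> \<Xi> \<Longrightarrow> norm (v0 y z) \<le> \<kappa>f"
    and A3g: "\<And>i y z. y \<in> C \<Longrightarrow> z \<in> \<Xi> \<Longrightarrow> norm (v i y z) \<le> \<kappa>g"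
    and eps_pos: "\<epsilon>0 > 0" and xhat_in: "xhat \<in> C"
    and slater: "\<And>i. expectation (\<lambda>\<omega>. G xhat (\<xi> \<omega>) $ i) \<le> - \<epsilon>0"
    and \<sigma>_pos: "\<sigma> > 0" and \<alpha>_pos: "\<alpha> > 0"
    and x0_in: "x0 \<in> C"
    and x_init: "\<And>\<omega>. \<omega> \<in> space M \<Longrightarrow> x 0 \<omega> = x0"
    and lam_init: "\<And>\<omega>. \<omega> \<in> space M \<Longrightarrow> lam 0 \<omega> = 0"
    and x_step_in: "\<And>k \<omega>. \<omega> \<in> space M \<Longrightarrow> x (Suc k) \<omega> \<in> C"
    and x_step_min: "\<And>k \<omega> y. \<omega> \<in> space M \<Longrightarrow> y \<in> C \<Longrightarrow>
        slpmm_L \<sigma> (x k \<omega>) (F (x k \<omega>) (xi k \<omega>)) (G (x k \<omega>) (xi k \<omega>))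
                (v0 (x k \<omega>) (xi k \<omega>)) (\<lambda>i. v i (x k \<omega>) (xi k \<omega>)) (x (Suc k) \<omega>) (lam k \<omega>)
          + \<alpha> / 2 * (norm (x (Suc k) \<omega> - x k \<omega>))\<^sup>2
        \<le> slpmm_L \<sigma> (x k \<omega>) (F (x k \<omega>) (xi k \<omega>)) (G (x k \<omega>) (xi k \<omega>))
                (v0 (x k \<omega>) (xi k \<omega>)) (\<lambda>i. v i (x k \<omega>) (xi k \<omega>)) y (lam k \<omega>)
          + \<alpha> / 2 * (norm (y - x k \<omega>))\<^sup>2"
    and lam_step: "\<And>k \<omega>. \<omega> \<in> space M \<Longrightarrow>
        lam (Suc k) \<omega> = (\<chi> i. pos (lam k \<omega> $ i + \<sigma> * (G (x k \<omega>) (xi k \<omega>) $ i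
                     + inner (v i (x k \<omega>) (xi k \<omega>)) (x (Suc k) \<omega> - x k \<omega>))))"
    and \<beta>0_def: "\<beta>0 = \<nu>g + sqrt (real CARD('m)) * \<kappa>g * R"
    and x_adapted: "\<And>k. x k \<in> borel_measurable (gen_filtration M N xi k)"
begin

lemma x_in: "\<omega> \<in> space M \<Longrightarrow> x k \<omega> \<in> C"
  by (cases k) (auto simp: x_init x0_in x_step_in)

lemma R_nonneg: "0 \<le> R" using A1[OF x0_in x0_in] by simp

lemma some_\<omega>: obtains \<omega> where "\<omega> \<in> space M"
  using not_empty by blast

lemma nu_nonneg: "0 \<le> \<nu>g"
proof -
  obtain \<omega> where "\<omega> \<in> space M" by (rule some_\<omega>)
  thus ?thesis using A2[OF x0_in xi_in] norm_ge_zero order_trans by blast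
qed
lemma kf_nonneg: "0 \<le> \<kappa>f"
proof -
  obtain \<omega> where "\<omega> \<in> space M" by (rule some_\<omega>)
  thus ?thesis using A3f[OF x0_in xi_in] norm_ge_zero order_trans by blast
qed
lemma kg_nonneg: "0 \<le> \<kappa>g"
proof -
  obtain \<omega> where "\<omega> \<in> space M" by (rule some_\<omega>)
  thus ?thesis using A3g[OF x0_in xi_in] norm_ge_zero order_trans by blast
qed
lemma beta_nonneg: "0 \<le> \<beta>0"
  unfolding \<beta>0_def using nu_nonneg kg_nonneg R_nonneg by simp

lemma lam_nonneg: "\<omega> \<in> space M \<Longrightarrow> 0 \<le> lam k \<omega> $ i"
  by (cases k) (auto simp: lam_init lam_step pos_nonneg)

lemma step_bound: assumes \<omega>: "\<omega> \<in> space M"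
  shows "norm (lam (Suc k) \<omega> - lam k \<omega>) \<le> \<sigma> * \<beta>0"
proof -
  define g where "g = G (x k \<omega>) (xi k \<omega>)"
  define w :: "real^'m" where "w = (\<chi> i. inner (v i (x k \<omega>) (xi k \<omega>)) (x (Suc k) \<omega> - x k \<omega>))"
  have wi: "\<bar>w $ i\<bar> \<le> \<kappa>g * R" for i
  proof -
    have "\<bar>w $ i\<bar> \<le> norm (v i (x k \<omega>) (xi k \<omega>)) * norm (x (Suc k) \<omega> - x k \<omega>)"
      unfolding w_def by (simp add: Cauchy_Schwarz_ineq2)
    also have "\<dots> \<le> \<kappa>g * R"
      using \<omega> by (intro mult_mono A3g A1 x_in xi_in kg_nonneg) auto
    finally show ?thesis .
  qed
  have nw: "norm w \<le> sqrt (real CARD('m)) * \<kappa>g * R"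
  proof -
    have "norm w \<le> L2_set (\<lambda>i. \<kappa>g * R) (UNIV :: 'm set)"
      unfolding norm_vec_def by (intro L2_set_mono) (use wi in auto)
    also have "\<dots> = sqrt (real CARD('m)) * \<kappa>g * R"
      using kg_nonneg R_nonneg by (simp add: L2_set_def real_sqrt_mult)
    finally show ?thesis .
  qed
  have "norm (lam (Suc k) \<omega> - lam k \<omega>) \<le> norm (\<sigma> *\<^sub>R (g + w))"
  proof (rule norm_le_componentwise_cart)
    fix i
    have "norm ((lam (Suc k) \<omega> - lam k \<omega>) $ i) = \<bar>pos (lam k \<omega> $ i + \<sigma> * (g $ i + w $ i)) - lam k \<omega> $ i\<bar>"
      using \<omega> by (simp add: lam_step g_def w_def)
    also have "\<dots> \<le> \<bar>\<sigma> * (g $ i + w $ i)\<bar>" by (rule pos_lip[OF lam_nonneg[OF \<omega>]])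
    finally show "norm ((lam (Suc k) \<omega> - lam k \<omega>) $ i) \<le> norm ((\<sigma> *\<^sub>R (g + w)) $ i)" by simp
  qed
  also have "\<dots> = \<sigma> * norm (g + w)" using \<sigma>_pos by simp
  also have "\<dots> \<le> \<sigma> * (\<nu>g + sqrt (real CARD('m)) * \<kappa>g * R)"
  proof (intro mult_left_mono)
    have "norm g \<le> \<nu>g" unfolding g_def using \<omega> by (intro A2 x_in xi_in)
    thus "norm (g + w) \<le> \<nu>g + sqrt (real CARD('m)) * \<kappa>g * R"
      using nw norm_triangle_ineq[of g w] by linarith
  qed (use \<sigma>_pos in auto)
  finally show ?thesis by (simp add: \<beta>0_def)
qed

lemma part1: "\<omega> \<in> space M \<Longrightarrow> \<bar>norm (lam (Suc k) \<omega>) - norm (lam k \<omega>)\<bar> \<le> \<sigma> * \<beta>0"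
  using step_bound norm_triangle_ineq3 order_trans by blast

lemma lam_drift_lower: "\<omega> \<in> space M \<Longrightarrow> norm (lam (k + j) \<omega>) \<ge> norm (lam k \<omega>) - real j * (\<sigma> * \<beta>0)"
proof (induction j)
  case (Suc j)
  have "norm (lam (Suc (k + j)) \<omega>) \<ge> norm (lam (k + j) \<omega>) - \<sigma> * \<beta>0"
    using part1[OF Suc.prems, of "k + j"] by linarith
  with Suc show ?case by (simp add: algebra_simps)
qed simp

lemma lam_drift_upper: "\<omega> \<in> space M \<Longrightarrow> norm (lam (k + j) \<omega>) \<le> norm (lam k \<omega>) + real j * (\<sigma> * \<beta>0)"
proof (induction j)
  case (Suc j)
  have "norm (lam (Suc (k + j)) \<omega>) \<le> norm (lam (k + j) \<omega>) + \<sigma> * \<beta>0"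
    using part1[OF Suc.prems, of "k + j"] by linarith
  with Suc show ?case by (simp add: algebra_simps)
qed simp

lemma lam_bound: "\<omega> \<in> space M \<Longrightarrow> norm (lam k \<omega>) \<le> real k * (\<sigma> * \<beta>0)"
  using lam_drift_upper[of \<omega> 0 k] by (simp add: lam_init)

end


context slp begin

lemma step_sq: assumes \<omega>: "\<omega> \<in> space M"
  shows "(norm (lam (Suc k) \<omega>))\<^sup>2 \<le> (norm (lam k \<omega>))\<^sup>2 + 2 * \<sigma> * inner (lam k \<omega>) (G xhat (xi k \<omega>))
     + \<sigma>\<^sup>2 * \<nu>g\<^sup>2 + 2 * \<sigma> * \<kappa>f * R
     + \<alpha> * \<sigma> * ((norm (xhat - x k \<omega>))\<^sup>2 - (norm (xhat - x (Suc k) \<omega>))\<^sup>2)"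
proof -
  define xk where "xk = x k \<omega>"
  define x1 where "x1 = x (Suc k) \<omega>"
  define z where "z = xi k \<omega>"
  define lk where "lk = lam k \<omega>"
  define g where "g = G xk z"
  define vk where "vk = (\<lambda>i. v i xk z)"
  define v0k where "v0k = v0 xk z"
  define ell where "ell = (\<lambda>i y. lk $ i + \<sigma> * (g $ i + inner (vk i) (y - xk)))"
  define h where "h = (\<lambda>y. inner v0k (y - xk) + 1 / (2 * \<sigma>) * (\<Sum>i\<in>UNIV. (pos (ell i y))\<^sup>2))"
  have xkC: "xk \<in> C" and x1C: "x1 \<in> C" and zX: "z \<in> \<Xi>"
    using \<omega> by (auto simp: xk_def x1_def z_def x_in xi_in)
  have Leq: "slpmm_L \<sigma> xk (F xk z) g v0k vk y lk = F xk z + h y - 1 / (2 * \<sigma>) * (norm lk)\<^sup>2" for y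
    by (simp add: slpmm_L_def h_def ell_def right_diff_distrib)
  have min: "h x1 + \<alpha> / 2 * (norm (x1 - xk))\<^sup>2 \<le> h y + \<alpha> / 2 * (norm (y - xk))\<^sup>2" if "y \<in> C" for y
  proof -
    have "slpmm_L \<sigma> xk (F xk z) g v0k vk x1 lk + \<alpha> / 2 * (norm (x1 - xk))\<^sup>2
       \<le> slpmm_L \<sigma> xk (F xk z) g v0k vk y lk + \<alpha> / 2 * (norm (y - xk))\<^sup>2"
      using x_step_min[OF \<omega> that, of k] by (simp add: xk_def x1_def z_def lk_def g_def vk_def v0k_def)
    thus ?thesis unfolding Leq by simp
  qed
  have hconv: "h ((1 - t) *\<^sub>R a + t *\<^sub>R b) \<le> (1 - t) * h a + t * h b"
    if t: "0 \<le> t" "t \<le> 1" for a b t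
  proof -
    have lin: "ell i ((1 - t) *\<^sub>R a + t *\<^sub>R b) = (1 - t) * ell i a + t * ell i b" for i
    proof -
      have "(1 - t) *\<^sub>R a + t *\<^sub>R b - xk = (1 - t) *\<^sub>R (a - xk) + t *\<^sub>R (b - xk)"
        by (simp add: algebra_simps)
      thus ?thesis by (simp add: ell_def inner_add_right algebra_simps)
    qed
    have lin0: "inner v0k ((1 - t) *\<^sub>R a + t *\<^sub>R b - xk) = (1 - t) * inner v0k (a - xk) + t * inner v0k (b - xk)"
    proof -
      have "(1 - t) *\<^sub>R a + t *\<^sub>R b - xk = (1 - t) *\<^sub>R (a - xk) + t *\<^sub>R (b - xk)"
        by (simp add: algebra_simps)
      thus ?thesis by (simp add: inner_add_right)
    qed
    have "(\<Sum>i\<in>UNIV. (pos (ell i ((1 - t) *\<^sub>R a + t *\<^sub>R b)))\<^sup>2)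
          \<le> (\<Sum>i\<in>UNIV. (1 - t) * (pos (ell i a))\<^sup>2 + t * (pos (ell i b))\<^sup>2)"
      unfolding lin by (intro sum_mono pos_sq_conv t)
    also have "\<dots> = (1 - t) * (\<Sum>i\<in>UNIV. (pos (ell i a))\<^sup>2) + t * (\<Sum>i\<in>UNIV. (pos (ell i b))\<^sup>2)"
      by (simp add: sum.distrib sum_distrib_left)
    finally have S: "(\<Sum>i\<in>UNIV. (pos (ell i ((1 - t) *\<^sub>R a + t *\<^sub>R b)))\<^sup>2)
          \<le> (1 - t) * (\<Sum>i\<in>UNIV. (pos (ell i a))\<^sup>2) + t * (\<Sum>i\<in>UNIV. (pos (ell i b))\<^sup>2)" .
    have "1 / (2 * \<sigma>) * (\<Sum>i\<in>UNIV. (pos (ell i ((1 - t) *\<^sub>R a + t *\<^sub>R b)))\<^sup>2)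
       \<le> 1 / (2 * \<sigma>) * ((1 - t) * (\<Sum>i\<in>UNIV. (pos (ell i a))\<^sup>2) + t * (\<Sum>i\<in>UNIV. (pos (ell i b))\<^sup>2))"
      using S \<sigma>_pos by (intro mult_left_mono) auto
    moreover have "1 / (2 * \<sigma>) * ((1 - t) * (\<Sum>i\<in>UNIV. (pos (ell i a))\<^sup>2) + t * (\<Sum>i\<in>UNIV. (pos (ell i b))\<^sup>2))
       = (1 - t) * (1 / (2 * \<sigma>) * (\<Sum>i\<in>UNIV. (pos (ell i a))\<^sup>2)) + t * (1 / (2 * \<sigma>) * (\<Sum>i\<in>UNIV. (pos (ell i b))\<^sup>2))"
      by (simp only: distrib_left mult.left_commute)
    ultimately show ?thesis unfolding h_def lin0 by (simp only: ring_distribs)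
  qed
  have tp: "h x1 + \<alpha> / 2 * (norm (x1 - xk))\<^sup>2 + \<alpha> / 2 * (norm (xhat - x1))\<^sup>2
           \<le> h xhat + \<alpha> / 2 * (norm (xhat - xk))\<^sup>2"
    by (rule three_point[OF C_convex x1C xhat_in \<alpha>_pos hconv min]) auto
  have hx1: "h x1 = inner v0k (x1 - xk) + 1 / (2 * \<sigma>) * (norm (lam (Suc k) \<omega>))\<^sup>2"
    unfolding h_def norm_sq_vec using \<omega>
    by (simp add: lam_step ell_def lk_def g_def vk_def xk_def x1_def z_def)
  define Gh where "Gh = G xhat z"
  have lle: "(pos (ell i xhat))\<^sup>2 \<le> (lk $ i + \<sigma> * Gh $ i)\<^sup>2" for i
  proof -
    have sub: "G xhat z $ i \<ge> G xk z $ i + inner (vk i) (xhat - xk)"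
      using v_sub[OF xkC zX, of i] xhat_in by (auto simp: subdiff_on_def vk_def)
    have "ell i xhat \<le> lk $ i + \<sigma> * Gh $ i"
      unfolding ell_def Gh_def g_def using sub \<sigma>_pos by (intro add_left_mono mult_left_mono) auto
    hence "(pos (ell i xhat))\<^sup>2 \<le> (pos (lk $ i + \<sigma> * Gh $ i))\<^sup>2"
      by (intro power_mono pos_mono pos_nonneg)
    also have "\<dots> \<le> (lk $ i + \<sigma> * Gh $ i)\<^sup>2" by (rule pos_sq_le)
    finally show ?thesis .
  qed
  have sumeq: "(\<Sum>i\<in>UNIV. (lk $ i + \<sigma> * Gh $ i)\<^sup>2) = (norm lk)\<^sup>2 + 2 * \<sigma> * inner lk Gh + \<sigma>\<^sup>2 * (norm Gh)\<^sup>2"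
  proof -
    have "(\<Sum>i\<in>UNIV. (lk $ i + \<sigma> * Gh $ i)\<^sup>2) = (\<Sum>i\<in>UNIV. (lk $ i)\<^sup>2 + 2 * \<sigma> * (lk $ i * Gh $ i) + \<sigma>\<^sup>2 * (Gh $ i)\<^sup>2)"
      by (intro sum.cong refl) (simp add: power2_eq_square algebra_simps)
    also have "\<dots> = (norm lk)\<^sup>2 + 2 * \<sigma> * inner lk Gh + \<sigma>\<^sup>2 * (norm Gh)\<^sup>2"
      by (simp add: sum.distrib sum_distrib_left norm_sq_vec inner_vec_real)
    finally show ?thesis .
  qed
  have nGh: "(norm Gh)\<^sup>2 \<le> \<nu>g\<^sup>2" unfolding Gh_def using A2[OF xhat_in zX] by (intro power_mono) auto
  have hxh: "h xhat \<le> inner v0k (xhat - xk) + 1 / (2 * \<sigma>) * ((norm lk)\<^sup>2 + 2 * \<sigma> * inner lk Gh + \<sigma>\<^sup>2 * \<nu>g\<^sup>2)"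
  proof -
    have "(\<Sum>i\<in>UNIV. (pos (ell i xhat))\<^sup>2) \<le> (norm lk)\<^sup>2 + 2 * \<sigma> * inner lk Gh + \<sigma>\<^sup>2 * \<nu>g\<^sup>2"
      using sum_mono[of UNIV "\<lambda>i. (pos (ell i xhat))\<^sup>2" "\<lambda>i. (lk $ i + \<sigma> * Gh $ i)\<^sup>2", OF lle] sumeq nGh \<sigma>_pos
      by (smt (verit, best) mult_left_mono zero_le_power2)
    thus ?thesis unfolding h_def using \<sigma>_pos by (intro add_left_mono mult_left_mono) auto
  qed
  have cs: "inner v0k (xhat - x1) \<le> \<kappa>f * R"
  proof -
    have "inner v0k (xhat - x1) \<le> norm v0k * norm (xhat - x1)" by (rule norm_cauchy_schwarz)
    also have "\<dots> \<le> \<kappa>f * R" unfolding v0k_def by (intro mult_mono A3f A1 xkC zX xhat_in x1C kf_nonneg) auto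
    finally show ?thesis .
  qed
  define P1 where "P1 = (norm (lam (Suc k) \<omega>))\<^sup>2"
  define P0 where "P0 = (norm lk)\<^sup>2"
  define I where "I = inner lk Gh"
  define a0 where "a0 = inner v0k (x1 - xk)"
  define b0 where "b0 = inner v0k (xhat - xk)"
  define D1 where "D1 = (norm (xhat - xk))\<^sup>2"
  define D2 where "D2 = (norm (xhat - x1))\<^sup>2"
  define E where "E = (norm (x1 - xk))\<^sup>2"
  have ba: "b0 - a0 \<le> \<kappa>f * R" using cs unfolding a0_def b0_def by (simp add: inner_diff_right)
  have main: "a0 + 1 / (2 * \<sigma>) * P1 + \<alpha> / 2 * E + \<alpha> / 2 * D2 \<le> b0 + 1 / (2 * \<sigma>) * (P0 + 2 * \<sigma> * I + \<sigma>\<^sup>2 * \<nu>g\<^sup>2) + \<alpha> / 2 * D1"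
    using tp hx1 hxh unfolding P1_def P0_def I_def a0_def b0_def D1_def D2_def E_def by linarith
  have "2 * \<sigma> * (a0 + 1 / (2 * \<sigma>) * P1 + \<alpha> / 2 * E + \<alpha> / 2 * D2) \<le> 2 * \<sigma> * (b0 + 1 / (2 * \<sigma>) * (P0 + 2 * \<sigma> * I + \<sigma>\<^sup>2 * \<nu>g\<^sup>2) + \<alpha> / 2 * D1)"
    using main \<sigma>_pos by (intro mult_left_mono) auto
  moreover have "2 * \<sigma> * (a0 + 1 / (2 * \<sigma>) * P1 + \<alpha> / 2 * E + \<alpha> / 2 * D2) = 2 * \<sigma> * a0 + P1 + \<alpha> * \<sigma> * E + \<alpha> * \<sigma> * D2"
    using \<sigma>_pos by (simp add: field_simps)
  moreover have "2 * \<sigma> * (b0 + 1 / (2 * \<sigma>) * (P0 + 2 * \<sigma> * I + \<sigma>\<^sup>2 * \<nu>g\<^sup>2) + \<alpha> / 2 * D1) = 2 * \<sigma> * b0 + P0 + 2 * \<sigma> * I + \<sigma>\<^sup>2 * \<nu>g\<^sup>2 + \<alpha> * \<sigma> * D1"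
    using \<sigma>_pos by (simp add: field_simps)
  ultimately have m2: "2 * \<sigma> * a0 + P1 + \<alpha> * \<sigma> * E + \<alpha> * \<sigma> * D2 \<le> 2 * \<sigma> * b0 + P0 + 2 * \<sigma> * I + \<sigma>\<^sup>2 * \<nu>g\<^sup>2 + \<alpha> * \<sigma> * D1"
    by simp
  have "2 * \<sigma> * (b0 - a0) \<le> 2 * \<sigma> * (\<kappa>f * R)" using ba \<sigma>_pos by (intro mult_left_mono) auto
  moreover have "0 \<le> \<alpha> * \<sigma> * E" using \<alpha>_pos \<sigma>_pos by (simp add: E_def)
  ultimately have "P1 \<le> P0 + 2 * \<sigma> * I + \<sigma>\<^sup>2 * \<nu>g\<^sup>2 + 2 * \<sigma> * \<kappa>f * R + \<alpha> * \<sigma> * (D1 - D2)"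
    using m2 by (simp add: algebra_simps)
  thus ?thesis unfolding P1_def P0_def I_def D1_def D2_def lk_def Gh_def z_def xk_def x1_def .
qed

end


context slp begin

lemma tele: assumes \<omega>: "\<omega> \<in> space M"
  shows "(norm (lam (k + j) \<omega>))\<^sup>2 \<le> (norm (lam k \<omega>))\<^sup>2
     + 2 * \<sigma> * (\<Sum>t<j. inner (lam (k + t) \<omega>) (G xhat (xi (k + t) \<omega>)))
     + real j * (\<sigma>\<^sup>2 * \<nu>g\<^sup>2 + 2 * \<sigma> * \<kappa>f * R)
     + \<alpha> * \<sigma> * ((norm (xhat - x k \<omega>))\<^sup>2 - (norm (xhat - x (k + j) \<omega>))\<^sup>2)"
proof (induction j)
  case (Suc j)
  have "(norm (lam (k + Suc j) \<omega>))\<^sup>2 \<le> (norm (lam (k + j) \<omega>))\<^sup>2 + 2 * \<sigma> * inner (lam (k + j) \<omega>) (G xhat (xi (k + j) \<omega>))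
     + \<sigma>\<^sup>2 * \<nu>g\<^sup>2 + 2 * \<sigma> * \<kappa>f * R
     + \<alpha> * \<sigma> * ((norm (xhat - x (k + j) \<omega>))\<^sup>2 - (norm (xhat - x (k + Suc j) \<omega>))\<^sup>2)"
    using step_sq[OF \<omega>, of "k + j"] by simp
  with Suc show ?case by (simp add: algebra_simps)
qed simp

lemma tele2: assumes \<omega>: "\<omega> \<in> space M"
  shows "(norm (lam (k + j) \<omega>))\<^sup>2 \<le> (norm (lam k \<omega>))\<^sup>2
     + 2 * \<sigma> * (\<Sum>t<j. \<Sum>i\<in>UNIV. lam (k + t) \<omega> $ i * G xhat (xi (k + t) \<omega>) $ i)
     + real j * (\<sigma>\<^sup>2 * \<nu>g\<^sup>2 + 2 * \<sigma> * \<kappa>f * R) + \<alpha> * \<sigma> * R\<^sup>2"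
proof -
  have "(norm (xhat - x k \<omega>))\<^sup>2 \<le> R\<^sup>2"
    using A1[OF xhat_in x_in[OF \<omega>]] by (intro power_mono) auto
  hence "(norm (xhat - x k \<omega>))\<^sup>2 - (norm (xhat - x (k + j) \<omega>))\<^sup>2 \<le> R\<^sup>2"
    using zero_le_power2[of "norm (xhat - x (k + j) \<omega>)"] by linarith
  hence "\<alpha> * \<sigma> * ((norm (xhat - x k \<omega>))\<^sup>2 - (norm (xhat - x (k + j) \<omega>))\<^sup>2) \<le> \<alpha> * \<sigma> * R\<^sup>2"
    using \<alpha>_pos \<sigma>_pos by (intro mult_left_mono) auto
  with tele[OF \<omega>, of k j] show ?thesis by (simp add: inner_vec_real)
qed

abbreviation "Fk k \<equiv> gen_filtration M N xi k"

lemma gen_sub: "(\<Union>i\<in>{..<k}. {xi i -` A \<inter> space M |A. A \<in> sets N}) \<subseteq> Pow (space M)"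
  by auto

lemma gen_sub_M: "(\<Union>i\<in>{..<k}. {xi i -` A \<inter> space M |A. A \<in> sets N}) \<subseteq> sets M"
  using xi_meas by (auto simp: measurable_sets)

lemma space_Fk[simp]: "space (Fk k) = space M"
  unfolding gen_filtration_def using gen_sub by (simp add: space_measure_of_conv)

lemma sets_Fk: "sets (Fk k) = sigma_sets (space M) (\<Union>i\<in>{..<k}. {xi i -` A \<inter> space M |A. A \<in> sets N})"
  unfolding gen_filtration_def using gen_sub by (simp add: sets_measure_of)

lemma sets_Fk_M: "sets (Fk k) \<subseteq> sets M"
  unfolding sets_Fk using gen_sub_M by (rule sets.sigma_sets_subset)

lemma subalg: "subalgebra M (Fk k)"
  using sets_Fk_M by (simp add: subalgebra_def)

lemma Fk_mono: "k \<le> j \<Longrightarrow> sets (Fk k) \<subseteq> sets (Fk j)"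
  unfolding sets_Fk by (intro sigma_sets_mono' UN_mono) auto

lemma subalg_Fk: "k \<le> j \<Longrightarrow> subalgebra (Fk j) (Fk k)"
  using Fk_mono by (simp add: subalgebra_def)

lemma meas_mono: "f \<in> measurable (Fk k) P \<Longrightarrow> k \<le> j \<Longrightarrow> f \<in> measurable (Fk j) P"
  by (rule measurable_from_subalg[OF subalg_Fk])

lemma meas_M: "f \<in> measurable (Fk k) P \<Longrightarrow> f \<in> measurable M P"
  by (rule measurable_from_subalg[OF subalg])

lemma xi_Fk: assumes "i < k" shows "xi i \<in> measurable (Fk k) N"
proof (rule measurableI)
  fix \<omega> assume "\<omega> \<in> space (Fk k)"
  thus "xi i \<omega> \<in> space N" using xi_meas[of i] by (auto simp: measurable_space)
next
  fix A assume "A \<in> sets N"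
  thus "xi i -` A \<inter> space (Fk k) \<in> sets (Fk k)"
    unfolding sets_Fk using assms by (intro sigma_sets.Basic) auto
qed

lemma nth_meas: "(\<lambda>x::real^'q. x $ i) \<in> borel_measurable borel"
  by (intro borel_measurable_continuous_onI continuous_intros)

lemma G_comp: assumes "f \<in> borel_measurable P" "g \<in> measurable P N"
  shows "(\<lambda>\<omega>. G (f \<omega>) (g \<omega>)) \<in> borel_measurable P"
  using measurable_compose[OF measurable_Pair[OF assms] G_meas] by simp

lemma v_comp: assumes "f \<in> borel_measurable P" "g \<in> measurable P N"
  shows "(\<lambda>\<omega>. v i (f \<omega>) (g \<omega>)) \<in> borel_measurable P"
  using measurable_compose[OF measurable_Pair[OF assms] v_meas[of i]] by simp

lemma lam_comp_meas: "(\<lambda>\<omega>. lam k \<omega> $ i) \<in> borel_measurable (Fk k)"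
proof (induction k arbitrary: i)
  case 0
  show ?case by (subst measurable_cong[where g = "\<lambda>_. 0"]) (auto simp: lam_init)
next
  case (Suc k)
  have xk: "x k \<in> borel_measurable (Fk (Suc k))" by (rule meas_mono[OF x_adapted]) simp
  have x1: "x (Suc k) \<in> borel_measurable (Fk (Suc k))" by (rule x_adapted)
  have z: "xi k \<in> measurable (Fk (Suc k)) N" by (rule xi_Fk) simp
  have l: "(\<lambda>\<omega>. lam k \<omega> $ i) \<in> borel_measurable (Fk (Suc k))" by (rule meas_mono[OF Suc.IH]) simp
  have g: "(\<lambda>\<omega>. G (x k \<omega>) (xi k \<omega>) $ i) \<in> borel_measurable (Fk (Suc k))"
    using measurable_compose[OF G_comp[OF xk z] nth_meas] by simp
  have vv: "(\<lambda>\<omega>. v i (x k \<omega>) (xi k \<omega>)) \<in> borel_measurable (Fk (Suc k))" by (rule v_comp[OF xk z])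
  have inn: "(\<lambda>\<omega>. inner (v i (x k \<omega>) (xi k \<omega>)) (x (Suc k) \<omega> - x k \<omega>)) \<in> borel_measurable (Fk (Suc k))"
    using vv x1 xk by measurable
  have "(\<lambda>\<omega>. pos (lam k \<omega> $ i + \<sigma> * (G (x k \<omega>) (xi k \<omega>) $ i
                     + inner (v i (x k \<omega>) (xi k \<omega>)) (x (Suc k) \<omega> - x k \<omega>)))) \<in> borel_measurable (Fk (Suc k))"
    unfolding pos_def using l g inn by measurable
  thus ?case by (subst measurable_cong[where g = "\<lambda>\<omega>. pos (lam k \<omega> $ i + \<sigma> * (G (x k \<omega>) (xi k \<omega>) $ i
                     + inner (v i (x k \<omega>) (xi k \<omega>)) (x (Suc k) \<omega> - x k \<omega>)))"]) (auto simp: lam_step)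
qed

lemma lam_meas: "lam k \<in> borel_measurable (Fk k)"
  by (rule vec_meas) (rule lam_comp_meas)

lemma norm_lam_meas: "(\<lambda>\<omega>. norm (lam k \<omega>)) \<in> borel_measurable (Fk k)"
  using lam_meas by measurable

end


context slp begin

lemma indep_Fj:
  assumes W: "W \<in> borel_measurable (Fk j)" and h: "h \<in> borel_measurable N"
  shows "indep_var borel W borel (\<lambda>\<omega>. h (xi j \<omega>))"
proof -
  define E where "E = (\<lambda>i. {xi i -` A \<inter> space M |A. A \<in> sets N})"
  define I where "I = (\<lambda>b::bool. if b then {..<j} else {j})"
  have ind: "indep_sets E UNIV"
    using xi_indep unfolding indep_vars_def2 E_def by auto
  have ind2: "indep_sets (\<lambda>b. sigma_sets (space M) (\<Union>i\<in>I b. E i)) UNIV"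
  proof (rule indep_sets_collect_sigma)
    show "indep_sets E (\<Union>b\<in>UNIV. I b)" by (rule indep_sets_mono_index[OF _ ind]) auto
    show "Int_stable (E i)" for i
      unfolding Int_stable_def E_def
    proof (intro ballI)
      fix a b assume "a \<in> {xi i -` A \<inter> space M |A. A \<in> sets N}" "b \<in> {xi i -` A \<inter> space M |A. A \<in> sets N}"
      then obtain A B where "a = xi i -` A \<inter> space M" "A \<in> sets N" "b = xi i -` B \<inter> space M" "B \<in> sets N" by auto
      thus "a \<inter> b \<in> {xi i -` A \<inter> space M |A. A \<in> sets N}"
        by (intro CollectI exI[of _ "A \<inter> B"]) auto
    qed
    show "disjoint_family_on I UNIV"
      unfolding disjoint_family_on_def I_def by auto
  qed
  have rW: "random_variable borel W" by (rule meas_M[OF W])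
  have rY: "random_variable borel (\<lambda>\<omega>. h (xi j \<omega>))"
    using measurable_compose[OF xi_meas[of j] h] .
  show ?thesis
    unfolding indep_var_eq
  proof (intro conjI rW rY)
    show "indep_set (sigma_sets (space M) {W -` A \<inter> space M |A. A \<in> sets borel})
      (sigma_sets (space M) {(\<lambda>\<omega>. h (xi j \<omega>)) -` A \<inter> space M |A. A \<in> sets borel})"
      unfolding indep_set_def
    proof (rule indep_sets_mono_sets[OF ind2])
      fix b :: bool
      show "(case b of True \<Rightarrow> sigma_sets (space M) {W -` A \<inter> space M |A. A \<in> sets borel}
               | False \<Rightarrow> sigma_sets (space M) {(\<lambda>\<omega>. h (xi j \<omega>)) -` A \<inter> space M |A. A \<in> sets borel})
            \<subseteq> sigma_sets (space M) (\<Union>i\<in>I b. E i)"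
      proof (cases b)
        case True
        have "sigma_sets (space M) {W -` A \<inter> space M |A. A \<in> sets borel} \<subseteq> sets (Fk j)"
        proof -
          have "{W -` A \<inter> space M |A. A \<in> sets borel} \<subseteq> sets (Fk j)"
            using W by (auto dest: measurable_sets)
          from sets.sigma_sets_subset[OF this] show ?thesis by simp
        qed
        thus ?thesis using True by (simp add: sets_Fk I_def E_def)
      next
        case False
        have "{(\<lambda>\<omega>. h (xi j \<omega>)) -` A \<inter> space M |A. A \<in> sets borel} \<subseteq> E j"
        proof
          fix S assume "S \<in> {(\<lambda>\<omega>. h (xi j \<omega>)) -` A \<inter> space M |A. A \<in> sets borel}"
          then obtain A where A: "S = (\<lambda>\<omega>. h (xi j \<omega>)) -` A \<inter> space M" "A \<in> sets borel" by auto
          have "S = xi j -` (h -` A \<inter> space N) \<inter> space M"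
            using A(1) xi_meas[of j] by (auto dest: measurable_space)
          moreover have "h -` A \<inter> space N \<in> sets N" using h A(2) by (rule measurable_sets)
          ultimately show "S \<in> E j" unfolding E_def by blast
        qed
        hence "sigma_sets (space M) {(\<lambda>\<omega>. h (xi j \<omega>)) -` A \<inter> space M |A. A \<in> sets borel}
               \<subseteq> sigma_sets (space M) (E j)" by (rule sigma_sets_mono')
        thus ?thesis using False by (simp add: I_def)
      qed
    qed
  qed
qed

definition "gx i = expectation (\<lambda>\<omega>. G xhat (\<xi> \<omega>) $ i)"

lemma Gx_meas: "(\<lambda>z. G xhat z $ i) \<in> borel_measurable N"
proof -
  have "(\<lambda>z. G xhat z) \<in> borel_measurable N"
    using measurable_compose[OF measurable_Pair[OF measurable_const[of xhat] measurable_ident_sets[OF refl]] G_meas]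
    by simp
  from measurable_compose[OF this nth_meas] show ?thesis by simp
qed

lemma Gx_bound: "\<omega> \<in> space M \<Longrightarrow> \<bar>G xhat (xi j \<omega>) $ i\<bar> \<le> \<nu>g"
  using A2[OF xhat_in xi_in] component_le_norm_cart order_trans by blast

lemma Gx_integrable: "integrable M (\<lambda>\<omega>. G xhat (xi j \<omega>) $ i)"
  by (rule integrable_const_bound[where B = \<nu>g])
     (use Gx_bound measurable_compose[OF xi_meas Gx_meas] in auto)

lemma indep_int:
  assumes W: "W \<in> borel_measurable (Fk j)" and Wi: "integrable M W"
  shows "(\<integral>\<omega>. W \<omega> * G xhat (xi j \<omega>) $ i \<partial>M) = (\<integral>\<omega>. W \<omega> \<partial>M) * gx i"
proof -
  have "(\<integral>\<omega>. W \<omega> * G xhat (xi j \<omega>) $ i \<partial>M) = (\<integral>\<omega>. W \<omega> \<partial>M) * (\<integral>\<omega>. G xhat (xi j \<omega>) $ i \<partial>M)"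
    by (rule indep_var_lebesgue_integral[OF indep_Fj[OF W Gx_meas] Wi Gx_integrable])
  also have "(\<integral>\<omega>. G xhat (xi j \<omega>) $ i \<partial>M) = gx i"
  proof -
    have "(\<integral>\<omega>. G xhat (xi j \<omega>) $ i \<partial>M) = integral\<^sup>L (distr M N (xi j)) (\<lambda>z. G xhat z $ i)"
      by (rule integral_distr[symmetric, OF xi_meas Gx_meas])
    also have "\<dots> = integral\<^sup>L (distr M N \<xi>) (\<lambda>z. G xhat z $ i)" by (simp add: xi_distr)
    also have "\<dots> = gx i" unfolding gx_def by (rule integral_distr[OF \<xi>_meas Gx_meas])
    finally show ?thesis .
  qed
  finally show ?thesis .
qed

end


context slp begin

lemma bint: fixes f :: "'w \<Rightarrow> real" and B :: real shows "f \<in> borel_measurable M \<Longrightarrow> (\<And>\<omega>. \<omega> \<in> space M \<Longrightarrow> \<bar>f \<omega>\<bar> \<le> B) \<Longrightarrow> integrable M f"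
  by (rule integrable_const_bound[where B = B]) auto

definition "Qf k s \<omega> = (norm (lam k \<omega>))\<^sup>2 - 2 * \<sigma> * \<epsilon>0 * (\<Sum>t<s. norm (lam k \<omega>) - real t * (\<sigma> * \<beta>0))
   + real s * (\<sigma>\<^sup>2 * \<nu>g\<^sup>2 + 2 * \<sigma> * \<kappa>f * R) + \<alpha> * \<sigma> * R\<^sup>2"

lemma lam_comp_bound: "\<omega> \<in> space M \<Longrightarrow> \<bar>lam k \<omega> $ i\<bar> \<le> real k * (\<sigma> * \<beta>0)"
  using component_le_norm_cart lam_bound order_trans by blast

lemma pointwise_key:
  assumes \<omega>: "\<omega> \<in> space M" and u: "0 \<le> u"
  shows "u * ((norm (lam (k + s) \<omega>))\<^sup>2 - Qf k s \<omega>)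
     \<le> 2 * \<sigma> * (\<Sum>t<s. \<Sum>i\<in>UNIV. u * lam (k + t) \<omega> $ i * (G xhat (xi (k + t) \<omega>) $ i + \<epsilon>0))"
proof -
  have low: "norm (lam k \<omega>) - real t * (\<sigma> * \<beta>0) \<le> (\<Sum>i\<in>UNIV. lam (k + t) \<omega> $ i)" for t
  proof -
    have "norm (lam k \<omega>) - real t * (\<sigma> * \<beta>0) \<le> norm (lam (k + t) \<omega>)" by (rule lam_drift_lower[OF \<omega>])
    also have "\<dots> \<le> (\<Sum>i\<in>UNIV. \<bar>lam (k + t) \<omega> $ i\<bar>)" by (rule norm_le_l1_cart)
    also have "\<dots> = (\<Sum>i\<in>UNIV. lam (k + t) \<omega> $ i)" using lam_nonneg[OF \<omega>] by simp
    finally show ?thesis .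
  qed
  have "(\<Sum>t<s. norm (lam k \<omega>) - real t * (\<sigma> * \<beta>0)) \<le> (\<Sum>t<s. \<Sum>i\<in>UNIV. lam (k + t) \<omega> $ i)"
    by (intro sum_mono low)
  hence e: "2 * \<sigma> * \<epsilon>0 * (\<Sum>t<s. norm (lam k \<omega>) - real t * (\<sigma> * \<beta>0)) \<le> 2 * \<sigma> * \<epsilon>0 * (\<Sum>t<s. \<Sum>i\<in>UNIV. lam (k + t) \<omega> $ i)"
    using \<sigma>_pos eps_pos by (intro mult_left_mono) auto
  have "(norm (lam (k + s) \<omega>))\<^sup>2 - Qf k s \<omega>
     \<le> 2 * \<sigma> * (\<Sum>t<s. \<Sum>i\<in>UNIV. lam (k + t) \<omega> $ i * G xhat (xi (k + t) \<omega>) $ i)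
       + 2 * \<sigma> * \<epsilon>0 * (\<Sum>t<s. norm (lam k \<omega>) - real t * (\<sigma> * \<beta>0))"
    using tele2[OF \<omega>, of k s] unfolding Qf_def by linarith
  also have "\<dots> \<le> 2 * \<sigma> * (\<Sum>t<s. \<Sum>i\<in>UNIV. lam (k + t) \<omega> $ i * G xhat (xi (k + t) \<omega>) $ i)
       + 2 * \<sigma> * \<epsilon>0 * (\<Sum>t<s. \<Sum>i\<in>UNIV. lam (k + t) \<omega> $ i)" using e by linarith
  also have "\<dots> = 2 * \<sigma> * (\<Sum>t<s. \<Sum>i\<in>UNIV. lam (k + t) \<omega> $ i * (G xhat (xi (k + t) \<omega>) $ i + \<epsilon>0))"
    by (simp add: distrib_left sum.distrib sum_distrib_left algebra_simps)
  finally have "(norm (lam (k + s) \<omega>))\<^sup>2 - Qf k s \<omega> \<le> 2 * \<sigma> * (\<Sum>t<s. \<Sum>i\<in>UNIV. lam (k + t) \<omega> $ i * (G xhat (xi (k + t) \<omega>) $ i + \<epsilon>0))" .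
  hence "u * ((norm (lam (k + s) \<omega>))\<^sup>2 - Qf k s \<omega>) \<le> u * (2 * \<sigma> * (\<Sum>t<s. \<Sum>i\<in>UNIV. lam (k + t) \<omega> $ i * (G xhat (xi (k + t) \<omega>) $ i + \<epsilon>0)))"
    using u by (rule mult_left_mono)
  also have "\<dots> = 2 * \<sigma> * (\<Sum>t<s. \<Sum>i\<in>UNIV. u * lam (k + t) \<omega> $ i * (G xhat (xi (k + t) \<omega>) $ i + \<epsilon>0))"
    by (simp add: sum_distrib_left algebra_simps)
  finally show ?thesis .
qed

lemma term_int:
  assumes uM: "u \<in> borel_measurable (Fk k)" and ub: "\<And>\<omega>. \<omega> \<in> space M \<Longrightarrow> 0 \<le> u \<omega> \<and> u \<omega> \<le> U"
  shows "integrable M (\<lambda>\<omega>. u \<omega> * lam (k + t) \<omega> $ i * (G xhat (xi (k + t) \<omega>) $ i + \<epsilon>0))"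
    and "(\<integral>\<omega>. u \<omega> * lam (k + t) \<omega> $ i * (G xhat (xi (k + t) \<omega>) $ i + \<epsilon>0) \<partial>M) \<le> 0"
proof -
  define W where "W = (\<lambda>\<omega>. u \<omega> * lam (k + t) \<omega> $ i)"
  have WM: "W \<in> borel_measurable (Fk (k + t))"
    unfolding W_def using meas_mono[OF uM, of "k + t"] lam_comp_meas[of "k + t" i] by measurable
  have Wb: "\<bar>W \<omega>\<bar> \<le> U * (real (k + t) * (\<sigma> * \<beta>0))" if "\<omega> \<in> space M" for \<omega>
    unfolding W_def abs_mult using ub[OF that] lam_comp_bound[OF that, of "k + t" i]
    by (intro mult_mono) auto
  have Wi: "integrable M W" by (rule bint[OF meas_M[OF WM] Wb])
  have W0: "\<omega> \<in> space M \<Longrightarrow> 0 \<le> W \<omega>" for \<omega> unfolding W_def using ub lam_nonneg by simp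
  have GM: "(\<lambda>\<omega>. G xhat (xi (k + t) \<omega>) $ i) \<in> borel_measurable M"
    using measurable_compose[OF xi_meas Gx_meas] .
  have i1: "integrable M (\<lambda>\<omega>. W \<omega> * G xhat (xi (k + t) \<omega>) $ i)"
  proof (rule bint[where B = "U * (real (k + t) * (\<sigma> * \<beta>0)) * \<nu>g"])
    show "(\<lambda>\<omega>. W \<omega> * G xhat (xi (k + t) \<omega>) $ i) \<in> borel_measurable M"
      using meas_M[OF WM] GM by measurable
    fix \<omega> assume \<omega>: "\<omega> \<in> space M"
    have "0 \<le> U * (real (k + t) * (\<sigma> * \<beta>0))" using Wb[OF \<omega>] by (meson abs_ge_zero order_trans)
    thus "\<bar>W \<omega> * G xhat (xi (k + t) \<omega>) $ i\<bar> \<le> U * (real (k + t) * (\<sigma> * \<beta>0)) * \<nu>g"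
      unfolding abs_mult using Wb[OF \<omega>] Gx_bound[OF \<omega>] by (intro mult_mono) auto
  qed
  have eq: "(\<lambda>\<omega>. u \<omega> * lam (k + t) \<omega> $ i * (G xhat (xi (k + t) \<omega>) $ i + \<epsilon>0))
     = (\<lambda>\<omega>. W \<omega> * G xhat (xi (k + t) \<omega>) $ i + \<epsilon>0 * W \<omega>)"
    unfolding W_def by (simp add: algebra_simps)
  show "integrable M (\<lambda>\<omega>. u \<omega> * lam (k + t) \<omega> $ i * (G xhat (xi (k + t) \<omega>) $ i + \<epsilon>0))"
    unfolding eq using i1 Wi by auto
  have "(\<integral>\<omega>. u \<omega> * lam (k + t) \<omega> $ i * (G xhat (xi (k + t) \<omega>) $ i + \<epsilon>0) \<partial>M)
      = (\<integral>\<omega>. W \<omega> * G xhat (xi (k + t) \<omega>) $ i \<partial>M) + \<epsilon>0 * (\<integral>\<omega>. W \<omega> \<partial>M)"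
    unfolding eq using i1 Wi by simp
  also have "\<dots> = (\<integral>\<omega>. W \<omega> \<partial>M) * (gx i + \<epsilon>0)"
    using indep_int[OF WM Wi, of i] by (simp add: algebra_simps)
  also have "\<dots> \<le> 0"
  proof (rule mult_nonneg_nonpos)
    show "0 \<le> (\<integral>\<omega>. W \<omega> \<partial>M)" using W0 by (intro integral_nonneg_AE) auto
    show "gx i + \<epsilon>0 \<le> 0" using slater[of i] by (simp add: gx_def)
  qed
  finally show "(\<integral>\<omega>. u \<omega> * lam (k + t) \<omega> $ i * (G xhat (xi (k + t) \<omega>) $ i + \<epsilon>0) \<partial>M) \<le> 0" .
qed

lemma Qf_meas: "Qf k s \<in> borel_measurable (Fk k)"
  unfolding Qf_def[abs_def] using norm_lam_meas[of k] by measurable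

lemma Qf_bound: "\<omega> \<in> space M \<Longrightarrow> \<bar>Qf k s \<omega>\<bar> \<le> (real k * (\<sigma> * \<beta>0))\<^sup>2 + 2 * \<sigma> * \<epsilon>0 * (\<Sum>t<s. real k * (\<sigma> * \<beta>0) + real t * (\<sigma> * \<beta>0))
   + \<bar>real s * (\<sigma>\<^sup>2 * \<nu>g\<^sup>2 + 2 * \<sigma> * \<kappa>f * R) + \<alpha> * \<sigma> * R\<^sup>2\<bar>"
proof -
  assume \<omega>: "\<omega> \<in> space M"
  have L: "norm (lam k \<omega>) \<le> real k * (\<sigma> * \<beta>0)" by (rule lam_bound[OF \<omega>])
  have t: "\<bar>norm (lam k \<omega>) - real t * (\<sigma> * \<beta>0)\<bar> \<le> real k * (\<sigma> * \<beta>0) + real t * (\<sigma> * \<beta>0)" for t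
  proof -
    have p: "0 \<le> real t * (\<sigma> * \<beta>0)" using beta_nonneg \<sigma>_pos by simp
    show ?thesis by (simp only: abs_le_iff) (use L p norm_ge_zero[of "lam k \<omega>"] in linarith)
  qed
  have "\<bar>\<Sum>t<s. norm (lam k \<omega>) - real t * (\<sigma> * \<beta>0)\<bar> \<le> (\<Sum>t<s. real k * (\<sigma> * \<beta>0) + real t * (\<sigma> * \<beta>0))"
    by (rule order_trans[OF sum_abs sum_mono[OF t]])
  hence s: "\<bar>2 * \<sigma> * \<epsilon>0 * (\<Sum>t<s. norm (lam k \<omega>) - real t * (\<sigma> * \<beta>0))\<bar> \<le> 2 * \<sigma> * \<epsilon>0 * (\<Sum>t<s. real k * (\<sigma> * \<beta>0) + real t * (\<sigma> * \<beta>0))"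
    using \<sigma>_pos eps_pos by (simp add: abs_mult)
  have sq: "(norm (lam k \<omega>))\<^sup>2 \<le> (real k * (\<sigma> * \<beta>0))\<^sup>2" using L by (intro power_mono) auto
  show ?thesis unfolding Qf_def using s sq by (smt (verit) zero_le_power2)
qed

lemma Y2_meas: "(\<lambda>\<omega>. (norm (lam (k + s) \<omega>))\<^sup>2) \<in> borel_measurable M"
  using meas_M[OF norm_lam_meas[of "k + s"]] by measurable

lemma key_integrable:
  assumes uM: "u \<in> borel_measurable (Fk k)" and ub: "\<And>\<omega>. \<omega> \<in> space M \<Longrightarrow> 0 \<le> u \<omega> \<and> u \<omega> \<le> U"
  shows "integrable M (\<lambda>\<omega>. u \<omega> * ((norm (lam (k + s) \<omega>))\<^sup>2 - Qf k s \<omega>))"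
proof (rule bint)
  show "(\<lambda>\<omega>. u \<omega> * ((norm (lam (k + s) \<omega>))\<^sup>2 - Qf k s \<omega>)) \<in> borel_measurable M"
    using meas_M[OF uM] Y2_meas meas_M[OF Qf_meas] by measurable
  fix \<omega> assume \<omega>: "\<omega> \<in> space M"
  have "\<bar>(norm (lam (k + s) \<omega>))\<^sup>2 - Qf k s \<omega>\<bar> \<le> (real (k + s) * (\<sigma> * \<beta>0))\<^sup>2 + ((real k * (\<sigma> * \<beta>0))\<^sup>2 + 2 * \<sigma> * \<epsilon>0 * (\<Sum>t<s. real k * (\<sigma> * \<beta>0) + real t * (\<sigma> * \<beta>0))
 + \<bar>real s * (\<sigma>\<^sup>2 * \<nu>g\<^sup>2 + 2 * \<sigma> * \<kappa>f * R) + \<alpha> * \<sigma> * R\<^sup>2\<bar>)"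
  proof -
    have "(norm (lam (k + s) \<omega>))\<^sup>2 \<le> (real (k + s) * (\<sigma> * \<beta>0))\<^sup>2"
      using lam_bound[OF \<omega>, of "k + s"] by (intro power_mono) auto
    thus ?thesis using Qf_bound[OF \<omega>, of k s] by (smt (verit) zero_le_power2)
  qed
  thus "\<bar>u \<omega> * ((norm (lam (k + s) \<omega>))\<^sup>2 - Qf k s \<omega>)\<bar> \<le> U * ((real (k + s) * (\<sigma> * \<beta>0))\<^sup>2 + ((real k * (\<sigma> * \<beta>0))\<^sup>2 + 2 * \<sigma> * \<epsilon>0 * (\<Sum>t<s. real k * (\<sigma> * \<beta>0) + real t * (\<sigma> * \<beta>0))
 + \<bar>real s * (\<sigma>\<^sup>2 * \<nu>g\<^sup>2 + 2 * \<sigma> * \<kappa>f * R) + \<alpha> * \<sigma> * R\<^sup>2\<bar>))"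
    unfolding abs_mult using ub[OF \<omega>] by (intro mult_mono) auto
qed

lemma key_integral:
  assumes uM: "u \<in> borel_measurable (Fk k)" and ub: "\<And>\<omega>. \<omega> \<in> space M \<Longrightarrow> 0 \<le> u \<omega> \<and> u \<omega> \<le> U"
  shows "(\<integral>\<omega>. u \<omega> * ((norm (lam (k + s) \<omega>))\<^sup>2 - Qf k s \<omega>) \<partial>M) \<le> 0"
proof -
  let ?T = "\<lambda>t i \<omega>. u \<omega> * lam (k + t) \<omega> $ i * (G xhat (xi (k + t) \<omega>) $ i + \<epsilon>0)"
  have ti: "integrable M (?T t i)" for t i by (rule term_int(1)[OF uM ub])
  have Bi: "integrable M (\<lambda>\<omega>. 2 * \<sigma> * (\<Sum>t<s. \<Sum>i\<in>UNIV. ?T t i \<omega>))"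
    using ti by auto
  have Ai: "integrable M (\<lambda>\<omega>. u \<omega> * ((norm (lam (k + s) \<omega>))\<^sup>2 - Qf k s \<omega>))"
    by (rule key_integrable[OF uM ub])
  have "(\<integral>\<omega>. u \<omega> * ((norm (lam (k + s) \<omega>))\<^sup>2 - Qf k s \<omega>) \<partial>M) \<le> (\<integral>\<omega>. 2 * \<sigma> * (\<Sum>t<s. \<Sum>i\<in>UNIV. ?T t i \<omega>) \<partial>M)"
    by (rule integral_mono[OF Ai Bi]) (use pointwise_key ub in auto)
  also have "\<dots> = 2 * \<sigma> * (\<Sum>t<s. \<Sum>i\<in>UNIV. (\<integral>\<omega>. ?T t i \<omega> \<partial>M))"
    using ti by (simp add: integral_sum)
  also have "\<dots> \<le> 0"
  proof -
    have "(\<Sum>t<s. \<Sum>i\<in>UNIV. (\<integral>\<omega>. ?T t i \<omega> \<partial>M)) \<le> 0"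
      by (intro sum_nonpos term_int(2)[OF uM ub])
    thus ?thesis using \<sigma>_pos by (simp add: mult_nonneg_nonpos)
  qed
  finally show ?thesis .
qed

end


context slp begin

lemma int_ind: fixes f :: "'w \<Rightarrow> real"
  shows "A \<in> sets M \<Longrightarrow> integrable M f \<Longrightarrow> integrable M (\<lambda>x. indicator A x * f x)"
  using integrable_mult_indicator[of A M f] by simp

lemma sfs: "sigma_finite_subalgebra M (Fk k)"
proof (rule finite_measure_subalgebra_is_sigma_finite)
  show "finite_measure_subalgebra M (Fk k)"
    unfolding finite_measure_subalgebra_def finite_measure_subalgebra_axioms_def
    using subalg finite_measure_axioms by auto
qed

lemma ce_le:
  fixes Z B :: "'w \<Rightarrow> real"
  assumes Zi: "integrable M Z" and BF: "B \<in> borel_measurable (Fk k)" and Bi: "integrable M B"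
    and H: "\<And>A. A \<in> sets (Fk k) \<Longrightarrow> (\<integral>\<omega>. indicator A \<omega> * Z \<omega> \<partial>M) \<le> (\<integral>\<omega>. indicator A \<omega> * B \<omega> \<partial>M)"
  shows "AE \<omega> in M. real_cond_exp M (Fk k) Z \<omega> \<le> B \<omega>"
proof -
  interpret S: sigma_finite_subalgebra M "Fk k" by (rule sfs)
  define CE where "CE = real_cond_exp M (Fk k) Z"
  have CEF: "CE \<in> borel_measurable (Fk k)" unfolding CE_def by (rule borel_measurable_cond_exp)
  have CEi: "integrable M CE" unfolding CE_def by (rule S.real_cond_exp_int(1)[OF Zi])
  define A where "A = {\<omega> \<in> space M. CE \<omega> - B \<omega> > 0}"
  have AF: "A \<in> sets (Fk k)"
  proof -
    have "{\<omega> \<in> space (Fk k). CE \<omega> - B \<omega> > 0} \<in> sets (Fk k)" using CEF BF by measurable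
    thus ?thesis by (simp add: A_def)
  qed
  have AM: "A \<in> sets M" using AF sets_Fk_M by auto
  have eqCE: "(\<integral>\<omega>. indicator A \<omega> * CE \<omega> \<partial>M) = (\<integral>\<omega>. indicator A \<omega> * Z \<omega> \<partial>M)"
    using S.real_cond_exp_intA[OF Zi AF] unfolding CE_def set_lebesgue_integral_def by simp
  have i1: "integrable M (\<lambda>\<omega>. indicator A \<omega> * (CE \<omega> - B \<omega>))"
    using CEi Bi AM by (intro int_ind integrable_diff) auto
  have "(\<integral>\<omega>. indicator A \<omega> * (CE \<omega> - B \<omega>) \<partial>M) = (\<integral>\<omega>. indicator A \<omega> * CE \<omega> \<partial>M) - (\<integral>\<omega>. indicator A \<omega> * B \<omega> \<partial>M)"
  proof -
    have "(\<lambda>\<omega>. indicator A \<omega> * (CE \<omega> - B \<omega>)) = (\<lambda>\<omega>. indicator A \<omega> * CE \<omega> - indicator A \<omega> * B \<omega>)"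
      by (simp add: algebra_simps)
    moreover have "integrable M (\<lambda>\<omega>. indicator A \<omega> * CE \<omega>)" using CEi AM by (intro int_ind) auto
    moreover have "integrable M (\<lambda>\<omega>. indicator A \<omega> * B \<omega>)" using Bi AM by (intro int_ind) auto
    ultimately show ?thesis by simp
  qed
  also have "\<dots> \<le> 0" using H[OF AF] eqCE by simp
  finally have le0: "(\<integral>\<omega>. indicator A \<omega> * (CE \<omega> - B \<omega>) \<partial>M) \<le> 0" .
  have nn: "AE \<omega> in M. 0 \<le> indicator A \<omega> * (CE \<omega> - B \<omega>)"
    by (intro AE_I2) (auto simp: A_def indicator_def)
  have "(\<integral>\<omega>. indicator A \<omega> * (CE \<omega> - B \<omega>) \<partial>M) = 0"
    using le0 integral_nonneg_AE[OF nn] by linarith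
  hence "AE \<omega> in M. indicator A \<omega> * (CE \<omega> - B \<omega>) = 0"
    using integral_nonneg_eq_0_iff_AE[OF i1 nn] by simp
  thus ?thesis
    by (rule AE_mp) (intro AE_I2, auto simp: A_def indicator_def CE_def)
qed

lemma sum_real_lt: "(\<Sum>t<s. real t) = real s * (real s - 1) / 2"
  by (induction s) (auto simp: field_simps)

lemma alg1:
  fixes Y L \<delta> Qv :: real
  assumes d: "\<delta> > 0" and Qv: "Qv \<le> (L - \<delta>)\<^sup>2 - 3 * \<delta>\<^sup>2" and L: "L \<ge> \<delta>" and Y: "0 \<le> Y"
  shows "Y - (L - \<delta>) \<le> (Y\<^sup>2 - Qv) / (2 * max (L - \<delta>) \<delta>)"
proof -
  define c where "c = L - \<delta>"
  define ct where "ct = max c \<delta>"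
  have ct: "ct > 0" using d by (simp add: ct_def)
  have q: "Qv + ct\<^sup>2 \<le> 2 * ct * c"
  proof (cases "c \<ge> \<delta>")
    case True
    hence e: "ct = c" by (simp add: ct_def)
    have "Qv \<le> c\<^sup>2 - 3 * \<delta>\<^sup>2" using Qv c_def by simp
    moreover have "2 * ct * c = c\<^sup>2 + c\<^sup>2" using e by (simp add: power2_eq_square)
    moreover have "ct\<^sup>2 = c\<^sup>2" using e by simp
    ultimately show ?thesis using zero_le_power2[of \<delta>] by linarith
  next
    case False
    hence e: "ct = \<delta>" by (simp add: ct_def)
    have f1: "c\<^sup>2 \<le> \<delta>\<^sup>2" using False L c_def by (intro power_mono) auto
    have f2: "0 \<le> 2 * \<delta> * c" using L d c_def by simp
    have f3: "Qv \<le> c\<^sup>2 - 3 * \<delta>\<^sup>2" using Qv c_def by simp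
    have "Qv + \<delta>\<^sup>2 \<le> 2 * \<delta> * c" using f1 f2 f3 zero_le_power2[of \<delta>] by linarith
    thus ?thesis using e by simp
  qed
  have am: "2 * ct * Y \<le> Y\<^sup>2 + ct\<^sup>2"
    using zero_le_power2[of "Y - ct"] by (simp add: power2_eq_square algebra_simps)
  have "(2 * ct) * (Y - c) \<le> Y\<^sup>2 - Qv" using q am by (simp add: algebra_simps)
  hence "Y - c \<le> (Y\<^sup>2 - Qv) / (2 * ct)" using ct by (simp add: pos_le_divide_eq mult.commute)
  thus ?thesis by (simp add: c_def ct_def)
qed

end


context slp begin

definition "thr s = \<epsilon>0 * \<sigma> * real s / 2 + \<sigma> * \<beta>0 * (real s - 1) + \<alpha> * R\<^sup>2 / (\<epsilon>0 * real s)
             + 2 * \<kappa>f * R / \<epsilon>0 + \<sigma> * \<nu>g\<^sup>2 / \<epsilon>0"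

lemma thr_ge: assumes s: "s > 0" shows "real s * (\<sigma> * \<epsilon>0 / 2) \<le> thr s"
proof -
  have "0 \<le> \<sigma> * \<beta>0 * (real s - 1)" using s \<sigma>_pos beta_nonneg by simp
  moreover have "0 \<le> \<alpha> * R\<^sup>2 / (\<epsilon>0 * real s)" using \<alpha>_pos eps_pos by simp
  moreover have "0 \<le> 2 * \<kappa>f * R / \<epsilon>0" using kf_nonneg R_nonneg eps_pos by simp
  moreover have "0 \<le> \<sigma> * \<nu>g\<^sup>2 / \<epsilon>0" using \<sigma>_pos eps_pos by simp
  ultimately show ?thesis unfolding thr_def by (simp add: algebra_simps)
qed

lemma Qf_le:
  assumes s: "s > 0" and L: "norm (lam k \<omega>) \<ge> thr s"
  shows "Qf k s \<omega> \<le> (norm (lam k \<omega>) - real s * (\<sigma> * \<epsilon>0 / 2))\<^sup>2 - 3 * (real s * (\<sigma> * \<epsilon>0 / 2))\<^sup>2"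
proof -
  define L where "L = norm (lam k \<omega>)"
  define d where "d = real s * (\<sigma> * \<epsilon>0 / 2)"
  define D where "D = \<sigma>\<^sup>2 * \<epsilon>0 * \<beta>0 * real s * (real s - 1) + real s * (\<sigma>\<^sup>2 * \<nu>g\<^sup>2 + 2 * \<sigma> * \<kappa>f * R) + \<alpha> * \<sigma> * R\<^sup>2"
  have sumeq: "(\<Sum>t<s. L - real t * (\<sigma> * \<beta>0)) = real s * L - \<sigma> * \<beta>0 * (real s * (real s - 1) / 2)"
  proof -
    have "(\<Sum>t<s. L - real t * (\<sigma> * \<beta>0)) = real s * L - (\<Sum>t<s. real t) * (\<sigma> * \<beta>0)"
      by (simp add: sum_subtractf sum_distrib_right)
    thus ?thesis by (simp add: sum_real_lt)
  qed
  have Qeq: "Qf k s \<omega> = L\<^sup>2 - 4 * d * L + D"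
    unfolding Qf_def L_def[symmetric] sumeq d_def D_def by (simp add: field_simps power2_eq_square)
  have thr_eq: "2 * d * thr s = 2 * d\<^sup>2 + D"
    unfolding thr_def d_def D_def using s eps_pos by (simp add: field_simps power2_eq_square)
  have dpos: "0 < d" unfolding d_def using s \<sigma>_pos eps_pos by simp
  have "2 * d * thr s \<le> 2 * d * L" using L dpos by (simp add: L_def)
  hence "D \<le> 2 * d * L - 2 * d\<^sup>2" using thr_eq by simp
  hence "Qf k s \<omega> \<le> L\<^sup>2 - 2 * d * L - 2 * d\<^sup>2" using Qeq by linarith
  also have "\<dots> = (L - d)\<^sup>2 - 3 * d\<^sup>2" by (simp add: power2_eq_square algebra_simps)
  finally show ?thesis by (simp add: L_def d_def)
qed

lemma norm_lam_M: "(\<lambda>\<omega>. norm (lam k \<omega>)) \<in> borel_measurable M"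
  by (rule meas_M[OF norm_lam_meas])

lemma part2:
  assumes s: "s > 0"
  shows "AE \<omega> in M. real_cond_exp M (Fk k) (\<lambda>\<omega>'. norm (lam (k + s) \<omega>') - norm (lam k \<omega>')) \<omega>
            \<le> (if norm (lam k \<omega>) < thr s then real s * \<sigma> * \<beta>0 else - real s * (\<sigma> * \<epsilon>0 / 2))"
proof -
  define Z where "Z = (\<lambda>\<omega>'. norm (lam (k + s) \<omega>') - norm (lam k \<omega>'))"
  define B where "B = (\<lambda>\<omega>. if norm (lam k \<omega>) < thr s then real s * \<sigma> * \<beta>0 else - real s * (\<sigma> * \<epsilon>0 / 2))"
  define d where "d = real s * (\<sigma> * \<epsilon>0 / 2)"
  have dpos: "0 < d" unfolding d_def using s \<sigma>_pos eps_pos by simp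
  have Zb: "\<bar>Z \<omega>\<bar> \<le> real (k + s) * (\<sigma> * \<beta>0) + real k * (\<sigma> * \<beta>0)" if "\<omega> \<in> space M" for \<omega>
    using lam_bound[OF that, of "k + s"] lam_bound[OF that, of k] norm_ge_zero[of "lam k \<omega>"]
      norm_ge_zero[of "lam (k + s) \<omega>"] unfolding Z_def by (simp only: abs_le_iff) linarith
  have Zi: "integrable M Z"
    by (rule bint[OF _ Zb]) (unfold Z_def, use norm_lam_M[of "k + s"] norm_lam_M[of k] in measurable)
  have BF: "B \<in> borel_measurable (Fk k)"
    unfolding B_def using norm_lam_meas[of k] by measurable
  have Bi: "integrable M B"
    by (rule bint[OF meas_M[OF BF], where B = "\<bar>real s * \<sigma> * \<beta>0\<bar> + \<bar>real s * (\<sigma> * \<epsilon>0 / 2)\<bar>"])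
       (auto simp: B_def)
  have H: "(\<integral>\<omega>. indicator A \<omega> * Z \<omega> \<partial>M) \<le> (\<integral>\<omega>. indicator A \<omega> * B \<omega> \<partial>M)" if A: "A \<in> sets (Fk k)" for A
  proof -
    define P where "P = {\<omega> \<in> space M. norm (lam k \<omega>) < thr s}"
    have PF: "P \<in> sets (Fk k)"
    proof -
      have "{\<omega> \<in> space (Fk k). norm (lam k \<omega>) < thr s} \<in> sets (Fk k)" using norm_lam_meas[of k] by measurable
      thus ?thesis by (simp add: P_def)
    qed
    define A2 where "A2 = A - P"
    have A2F: "A2 \<in> sets (Fk k)" unfolding A2_def using A PF by auto
    have AM: "A \<in> sets M" using A sets_Fk_M by auto
    have Asp: "A \<subseteq> space M" using sets.sets_into_space[OF AM] .
    define u where "u = (\<lambda>\<omega>. indicator A2 \<omega> / (2 * max (norm (lam k \<omega>) - d) d))"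
    have uM: "u \<in> borel_measurable (Fk k)"
      unfolding u_def using norm_lam_meas[of k] A2F by measurable
    have ub: "0 \<le> u \<omega> \<and> u \<omega> \<le> 1 / (2 * d)" if "\<omega> \<in> space M" for \<omega>
    proof -
      have m: "d \<le> max (norm (lam k \<omega>) - d) d" by simp
      have "indicator A2 \<omega> / (2 * max (norm (lam k \<omega>) - d) d) \<le> 1 / (2 * max (norm (lam k \<omega>) - d) d)"
        using dpos m by (intro divide_right_mono) (auto simp: indicator_def)
      also have "\<dots> \<le> 1 / (2 * d)" using dpos m by (intro divide_left_mono) auto
      finally show ?thesis unfolding u_def using dpos m by (auto simp: indicator_def)
    qed
    have pw: "indicator A \<omega> * (Z \<omega> - B \<omega>) \<le> u \<omega> * ((norm (lam (k + s) \<omega>))\<^sup>2 - Qf k s \<omega>)" if \<omega>: "\<omega> \<in> space M" for \<omega>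
    proof (cases "\<omega> \<in> A")
      case False
      thus ?thesis using False by (simp add: u_def A2_def indicator_def)
    next
      case inA: True
      show ?thesis
      proof (cases "norm (lam k \<omega>) < thr s")
        case True
        hence "\<omega> \<notin> A2" using \<omega> by (simp add: A2_def P_def)
        moreover have "Z \<omega> \<le> real s * \<sigma> * \<beta>0" using lam_drift_upper[OF \<omega>, of k s] by (simp add: Z_def)
        ultimately show ?thesis using inA True by (simp add: u_def B_def)
      next
        case False
        hence inA2: "\<omega> \<in> A2" using \<omega> inA by (simp add: A2_def P_def)
        have L: "norm (lam k \<omega>) \<ge> d" using thr_ge[OF s] False unfolding d_def by simp
        have "Z \<omega> - B \<omega> = norm (lam (k + s) \<omega>) - (norm (lam k \<omega>) - d)"
          using False by (simp add: Z_def B_def d_def)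
        also have "\<dots> \<le> ((norm (lam (k + s) \<omega>))\<^sup>2 - Qf k s \<omega>) / (2 * max (norm (lam k \<omega>) - d) d)"
          by (rule alg1[OF dpos _ L norm_ge_zero]) (use Qf_le[OF s] False in \<open>simp add: d_def\<close>)
        also have "\<dots> = u \<omega> * ((norm (lam (k + s) \<omega>))\<^sup>2 - Qf k s \<omega>)" using inA2 by (simp add: u_def)
        finally show ?thesis using inA by simp
      qed
    qed
    have i1: "integrable M (\<lambda>\<omega>. indicator A \<omega> * (Z \<omega> - B \<omega>))"
      using Zi Bi AM by (intro int_ind integrable_diff) auto
    have i2: "integrable M (\<lambda>\<omega>. u \<omega> * ((norm (lam (k + s) \<omega>))\<^sup>2 - Qf k s \<omega>))"
      by (rule key_integrable[OF uM ub])
    have "(\<integral>\<omega>. indicator A \<omega> * (Z \<omega> - B \<omega>) \<partial>M) \<le> (\<integral>\<omega>. u \<omega> * ((norm (lam (k + s) \<omega>))\<^sup>2 - Qf k s \<omega>) \<partial>M)"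
      by (rule integral_mono[OF i1 i2 pw])
    also have "\<dots> \<le> 0" by (rule key_integral[OF uM ub])
    finally have le: "(\<integral>\<omega>. indicator A \<omega> * (Z \<omega> - B \<omega>) \<partial>M) \<le> 0" .
    have "(\<integral>\<omega>. indicator A \<omega> * (Z \<omega> - B \<omega>) \<partial>M) = (\<integral>\<omega>. indicator A \<omega> * Z \<omega> \<partial>M) - (\<integral>\<omega>. indicator A \<omega> * B \<omega> \<partial>M)"
    proof -
      have "(\<lambda>\<omega>. indicator A \<omega> * (Z \<omega> - B \<omega>)) = (\<lambda>\<omega>. indicator A \<omega> * Z \<omega> - indicator A \<omega> * B \<omega>)"
        by (simp add: algebra_simps)
      moreover have "integrable M (\<lambda>\<omega>. indicator A \<omega> * Z \<omega>)" using Zi AM by (intro int_ind) auto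
      moreover have "integrable M (\<lambda>\<omega>. indicator A \<omega> * B \<omega>)" using Bi AM by (intro int_ind) auto
      ultimately show ?thesis by simp
    qed
    with le show ?thesis by simp
  qed
  have "AE \<omega> in M. real_cond_exp M (Fk k) Z \<omega> \<le> B \<omega>" by (rule ce_le[OF Zi BF Bi H])
  thus ?thesis unfolding Z_def B_def .
qed

end


theorem lemma4:
  fixes M :: "'w measure" and N :: "'b measure" and \<Xi> :: "'b set"
    and \<xi> :: "'w \<Rightarrow> 'b" and xi :: "nat \<Rightarrow> 'w \<Rightarrow> 'b"
    and C :: "(real^'n) set"
    and F :: "real^'n \<Rightarrow> 'b \<Rightarrow> real"
    and G :: "real^'n \<Rightarrow> 'b \<Rightarrow> real^'m"
    and v0 :: "real^'n \<Rightarrow> 'b \<Rightarrow> real^'n"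
    and v :: "'m \<Rightarrow> real^'n \<Rightarrow> 'b \<Rightarrow> real^'n"
    and \<sigma> \<alpha> R \<nu>g \<kappa>f \<kappa>g \<epsilon>0 :: real
    and x0 :: "real^'n" and xhat :: "real^'n"
    and x :: "nat \<Rightarrow> 'w \<Rightarrow> real^'n" and lam :: "nat \<Rightarrow> 'w \<Rightarrow> real^'m"
    and s :: nat
  assumes P: "prob_space M"
    \<comment> \<open>the random vector and its i.i.d. copies, supported on Xi\<close>
    and \<xi>_meas: "\<xi> \<in> measurable M N"
    and xi_meas: "\<And>k. xi k \<in> measurable M N"
    and xi_indep: "prob_space.indep_vars M (\<lambda>_. N) xi UNIV"
    and xi_distr: "\<And>k. distr M N (xi k) = distr M N \<xi>"
    and \<xi>_in: "\<And>\<omega>. \<omega> \<in> space M \<Longrightarrow> \<xi> \<omega> \<in> \<Xi>"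
    and xi_in: "\<And>k \<omega>. \<omega> \<in> space M \<Longrightarrow> xi k \<omega> \<in> \<Xi>"
    \<comment> \<open>the feasible set\<close>
    and C_ne: "C \<noteq> {}" and C_compact: "compact C" and C_convex: "convex C"
    \<comment> \<open>convexity, continuity, measurability of F and G\<close>
    and F_convex: "\<And>z. z \<in> \<Xi> \<Longrightarrow> convex_on C (\<lambda>y. F y z)"
    and F_cont: "\<And>z. z \<in> \<Xi> \<Longrightarrow> continuous_on C (\<lambda>y. F y z)"
    and G_convex: "\<And>z i. z \<in> \<Xi> \<Longrightarrow> convex_on C (\<lambda>y. G y z $ i)"
    and G_cont: "\<And>z i. z \<in> \<Xi> \<Longrightarrow> continuous_on C (\<lambda>y. G y z $ i)"
    and F_meas: "(\<lambda>(y, z). F y z) \<in> borel_measurable (borel \<Otimes>\<^sub>M N)"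
    and G_meas: "(\<lambda>(y, z). G y z) \<in> borel_measurable (borel \<Otimes>\<^sub>M N)"
    and f_finite: "\<And>y. y \<in> C \<Longrightarrow> integrable M (\<lambda>\<omega>. F y (\<xi> \<omega>))"
    and g_finite: "\<And>y i. y \<in> C \<Longrightarrow> integrable M (\<lambda>\<omega>. G y (\<xi> \<omega>) $ i)"
    \<comment> \<open>stochastic subgradients\<close>
    and v0_sub: "\<And>y z. y \<in> C \<Longrightarrow> z \<in> \<Xi> \<Longrightarrow> v0 y z \<in> subdiff_on C (\<lambda>u. F u z) y"
    and v_sub: "\<And>i y z. y \<in> C \<Longrightarrow> z \<in> \<Xi> \<Longrightarrow> v i y z \<in> subdiff_on C (\<lambda>u. G u z $ i) y"
    and v0_meas: "(\<lambda>(y, z). v0 y z) \<in> borel_measurable (borel \<Otimes>\<^sub>M N)"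
    and v_meas: "\<And>i. (\<lambda>(y, z). v i y z) \<in> borel_measurable (borel \<Otimes>\<^sub>M N)"
    \<comment> \<open>(A1)-(A4)\<close>
    and A1: "\<And>y y'. y \<in> C \<Longrightarrow> y' \<in> C \<Longrightarrow> norm (y - y') \<le> R"
    and A2: "\<And>y z. y \<in> C \<Longrightarrow> z \<in> \<Xi> \<Longrightarrow> norm (G y z) \<le> \<nu>g"
    and A3f: "\<And>y z. y \<in> C \<Longrightarrow> z \<in> \<Xi> \<Longrightarrow> norm (v0 y z) \<le> \<kappa>f"
    and A3g: "\<And>i y z. y \<in> C \<Longrightarrow> z \<in> \<Xi> \<Longrightarrow> norm (v i y z) \<le> \<kappa>g"
    and A4: "\<epsilon>0 > 0" "xhat \<in> C"
      "\<And>i. prob_space.expectation M (\<lambda>\<omega>. G xhat (\<xi> \<omega>) $ i) \<le> - \<epsilon>0"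
    \<comment> \<open>SLPMM iteration\<close>
    and \<sigma>_pos: "\<sigma> > 0" and \<alpha>_pos: "\<alpha> > 0"
    and x0_in: "x0 \<in> C"
    and x_init: "\<And>\<omega>. \<omega> \<in> space M \<Longrightarrow> x 0 \<omega> = x0"
    and lam_init: "\<And>\<omega>. \<omega> \<in> space M \<Longrightarrow> lam 0 \<omega> = 0"
    and x_step_in: "\<And>k \<omega>. \<omega> \<in> space M \<Longrightarrow> x (Suc k) \<omega> \<in> C"
    and x_step_min: "\<And>k \<omega> y. \<omega> \<in> space M \<Longrightarrow> y \<in> C \<Longrightarrow>
        slpmm_L \<sigma> (x k \<omega>) (F (x k \<omega>) (xi k \<omega>)) (G (x k \<omega>) (xi k \<omega>))
                (v0 (x k \<omega>) (xi k \<omega>)) (\<lambda>i. v i (x k \<omega>) (xi k \<omega>)) (x (Suc k) \<omega>) (lam k \<omega>)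
          + \<alpha> / 2 * (norm (x (Suc k) \<omega> - x k \<omega>))\<^sup>2
        \<le> slpmm_L \<sigma> (x k \<omega>) (F (x k \<omega>) (xi k \<omega>)) (G (x k \<omega>) (xi k \<omega>))
                (v0 (x k \<omega>) (xi k \<omega>)) (\<lambda>i. v i (x k \<omega>) (xi k \<omega>)) y (lam k \<omega>)
          + \<alpha> / 2 * (norm (y - x k \<omega>))\<^sup>2"
    and lam_step: "\<And>k \<omega>. \<omega> \<in> space M \<Longrightarrow>
        lam (Suc k) \<omega> = (\<chi> i. pos (lam k \<omega> $ i + \<sigma> * (G (x k \<omega>) (xi k \<omega>) $ i
                     + inner (v i (x k \<omega>) (xi k \<omega>)) (x (Suc k) \<omega> - x k \<omega>))))"
    \<comment> \<open>technical: the iterates are adapted to the filtration\<close>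
    and x_adapted: "\<And>k. x k \<in> borel_measurable (gen_filtration M N xi k)"
    and s_pos: "s > 0"
  shows
    "let p = real CARD('m);
         \<beta>0 = \<nu>g + sqrt p * \<kappa>g * R;
         thr = \<epsilon>0 * \<sigma> * real s / 2 + \<sigma> * \<beta>0 * (real s - 1) + \<alpha> * R\<^sup>2 / (\<epsilon>0 * real s)
             + 2 * \<kappa>f * R / \<epsilon>0 + \<sigma> * \<nu>g\<^sup>2 / \<epsilon>0
     in (\<forall>k. \<forall>\<omega>\<in>space M. \<bar>norm (lam (Suc k) \<omega>) - norm (lam k \<omega>)\<bar> \<le> \<sigma> * \<beta>0)
      \<and> (\<forall>k. AE \<omega> in M.
            real_cond_exp M (gen_filtration M N xi k)
               (\<lambda>\<omega>'. norm (lam (k + s) \<omega>') - norm (lam k \<omega>')) \<omega>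
            \<le> (if norm (lam k \<omega>) < thr then real s * \<sigma> * \<beta>0
                else - real s * (\<sigma> * \<epsilon>0 / 2)))"
proof -
  interpret slp M N \<Xi> \<xi> xi C F G v0 v \<sigma> \<alpha> R \<nu>g \<kappa>f \<kappa>g \<epsilon>0
      "\<nu>g + sqrt (real CARD('m)) * \<kappa>g * R" x0 xhat x lam
    by (intro slp.intro slp_axioms.intro) (fact assms | rule refl)+
  show ?thesis
    unfolding Let_def
  proof (intro conjI allI ballI)
    fix k \<omega> assume "\<omega> \<in> space M"
    thus "\<bar>norm (lam (Suc k) \<omega>) - norm (lam k \<omega>)\<bar> \<le> \<sigma> * (\<nu>g + sqrt (real CARD('m)) * \<kappa>g * R)"
      by (rule part1)
  next
    fix k
    show "AE \<omega> in M. real_cond_exp M (gen_filtration M N xi k) (\<lambda>\<omega>'. norm (lam (k + s) \<omega>') - norm (lam k \<omega>')) \<omega>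
            \<le> (if norm (lam k \<omega>) < \<epsilon>0 * \<sigma> * real s / 2 + \<sigma> * (\<nu>g + sqrt (real CARD('m)) * \<kappa>g * R) * (real s - 1) + \<alpha> * R\<^sup>2 / (\<epsilon>0 * real s)
             + 2 * \<kappa>f * R / \<epsilon>0 + \<sigma> * \<nu>g\<^sup>2 / \<epsilon>0
                then real s * \<sigma> * (\<nu>g + sqrt (real CARD('m)) * \<kappa>g * R)
                else - real s * (\<sigma> * \<epsilon>0 / 2))"
      using part2[OF s_pos, of k] unfolding thr_def .
  qed
qed

end
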